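(* Let $(f,I,U)$ be a safety verification problem that is robustly safe with robustness margin $\mu>0$, with $\overline{I}\cap\overline{U}=\emptyset$ and $\mathbb{R}^n\setminus U$ bounded, and let $V$ be a $\mu$-robust safety certificate of $(f,I,U)$. Let $\partial\overline{V}$ denote the boundary of the closure of $V$. Then for every $x\in R^{\mathbb{R}}_f(\partial\overline{V})$ there is precisely one $t\in\mathbb{R}$ such that $\varphi_f(x,t)\in\partial\overline{V}$.
   Context: A safety verification problem is a triple $(f,I,U)$ with $f:\mathbb{R}^n\to\mathbb{R}^n$ smooth, $I,U\subseteq\mathbb{R}^n$. Convention: the flow $\varphi_f(x,t)$ of $\dot x=f(x)$ (the state reached at time $t\in\mathbb{R}$ from $x$; negative $t$ allowed, $\varphi_f(x,t)=y$ iff $\varphi_f(y,-t)=x$) is defined for all $x$, $t$. For $X\subseteq\mathbb{R}^n$, $R^{\mathbb{R}}_f(X)=\{\varphi_f(x,t)\mid x\in X,\ t\in\mathbb{R}\}$. For $\varepsilon\ge 0$, an $\varepsilon$-solution of $\dot x=f(x)$ is a differentiable function $x:\mathbb{R}^{\ge0}\to\mathbb{R}^n$ with $\|f(x(t))-\dot x(t)\|\le\varepsilon$ for all $t\ge0$. For $X\subseteq\mathbb{R}^n$, $T\subseteq\mathbb{R}^{\ge0}$: $R^{T}_{f,\varepsilon}(X)=\{x(t)\mid t\in T,\ x\text{ an }\varepsilon\text{-solution with }x(0)\in X\}$, $R_{f,\varepsilon}(X)=R^{\mathbb{R}^{\ge0}}_{f,\varepsilon}(X)$. Robustly safe with robustness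 margin $\mu>0$ means $R_{f,\mu}(I)\cap U=\emptyset$. A $\mu$-robust safety certificate is a set $V$ with $I\subseteq V$, $R_{f,\mu}(V)\subseteq V$, $V\cap U=\emptyset$. *)

theory Defs
  imports "HOL-Analysis.Analysis"
begin

text \<open>C-infinity (smooth) maps between fixed spaces: continuous, Frechet differentiable
  everywhere, and every directional derivative of the derivative is again smooth
  (greatest fixpoint).\<close>
coinductive smooth_map :: "('a::real_normed_vector \<Rightarrow> 'b::real_normed_vector) \<Rightarrow> bool" where
  "continuous_on UNIV g \<Longrightarrow> (\<forall>x. g differentiable (at x)) \<Longrightarrow>
   (\<forall>v. smooth_map (\<lambda>x. frechet_derivative g (at x) v)) \<Longrightarrow> smooth_map g"

definition is_flow :: "(real^'n \<Rightarrow> real^'n) \<Rightarrow> (real^'n \<Rightarrow> real \<Rightarrow> real^'n) \<Rightarrow> bool" where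
  "is_flow f phi \<longleftrightarrow> (\<forall>x. phi x 0 = x) \<and>
     (\<forall>x t. ((\<lambda>s. phi x s) has_vector_derivative f (phi x t)) (at t))"

definition flow_reach :: "(real^'n \<Rightarrow> real \<Rightarrow> real^'n) \<Rightarrow> (real^'n) set \<Rightarrow> (real^'n) set" where
  "flow_reach phi X = {phi x t | x t. x \<in> X}"

definition eps_solution :: "(real^'n \<Rightarrow> real^'n) \<Rightarrow> real \<Rightarrow> (real \<Rightarrow> real^'n) \<Rightarrow> bool" where
  "eps_solution f eps x \<longleftrightarrow> (\<exists>x'. \<forall>t\<ge>0. (x has_vector_derivative x' t) (at t within {0..})
      \<and> norm (f (x t) - x' t) \<le> eps)"

definition eps_reach :: "(real^'n \<Rightarrow> real^'n) \<Rightarrow> real \<Rightarrow> (real^'n) set \<Rightarrow> (real^'n) set" where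
  "eps_reach f eps X = {x t | x t. eps_solution f eps x \<and> x 0 \<in> X \<and> t \<ge> 0}"

definition robustly_safe :: "(real^'n \<Rightarrow> real^'n) \<Rightarrow> (real^'n) set \<Rightarrow> (real^'n) set \<Rightarrow> real \<Rightarrow> bool" where
  "robustly_safe f I U mu \<longleftrightarrow> mu > 0 \<and> eps_reach f mu I \<inter> U = {}"

definition robust_certificate :: "(real^'n \<Rightarrow> real^'n) \<Rightarrow> (real^'n) set \<Rightarrow> (real^'n) set \<Rightarrow> real \<Rightarrow> (real^'n) set \<Rightarrow> bool" where
  "robust_certificate f I U mu V \<longleftrightarrow> I \<subseteq> V \<and> eps_reach f mu V \<subseteq> V \<and> V \<inter> U = {}"

end

theory Submission
  imports Defs
begin

lemma smooth_lipschitz: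
  fixes f :: "'a::euclidean_space \<Rightarrow> 'b::real_normed_vector"
  assumes "smooth_map f"
  shows "\<exists>L\<ge>0. \<forall>x\<in>cball 0 R. \<forall>y\<in>cball 0 R. norm (f x - f y) \<le> L * norm (x - y)"
proof -
  define D where "D x = frechet_derivative f (at x)" for x
  have diff: "\<forall>x. f differentiable at x"
   and sm: "\<forall>v. smooth_map (\<lambda>x. D x v)"
    using assms unfolding D_def by (auto elim: smooth_map.cases)
  have cont: "continuous_on UNIV (\<lambda>x. D x v)" for v
    using sm by (auto elim: smooth_map.cases)
  have der: "(f has_derivative D x) (at x)" for x
    using diff frechet_derivative_works unfolding D_def by blast
  have lin: "linear (D x)" for x using der has_derivative_linear by blast
  have "\<exists>M. \<forall>x\<in>cball 0 R. norm (D x b) \<le> M" for b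
  proof -
    have "compact ((\<lambda>x. D x b) ` cball 0 R)"
      by (rule compact_continuous_image) (rule continuous_on_subset[OF cont], auto)
    then show ?thesis using compact_imp_bounded bounded_iff by (metis imageI)
  qed
  then obtain M where M: "\<And>b x. x \<in> cball 0 R \<Longrightarrow> norm (D x b) \<le> M b" by metis
  define B where "B = (\<Sum>b\<in>Basis. M b)"
  have bnd: "norm (D x h) \<le> B * norm h" if x: "x \<in> cball 0 R" for x h
  proof -
    have "D x h = D x (\<Sum>b\<in>Basis. (h \<bullet> b) *\<^sub>R b)" by (simp add: euclidean_representation)
    also have "\<dots> = (\<Sum>b\<in>Basis. (h \<bullet> b) *\<^sub>R D x b)"
      using lin[of x] by (simp add: linear_sum linear_scale)
    finally have "norm (D x h) \<le> (\<Sum>b\<in>Basis. norm ((h \<bullet> b) *\<^sub>R D x b))"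
      by (metis norm_sum)
    also have "\<dots> \<le> (\<Sum>b\<in>Basis. norm h * M b)"
    proof (rule sum_mono)
      fix b :: 'a assume b: "b \<in> Basis"
      have "norm ((h \<bullet> b) *\<^sub>R D x b) = \<bar>h \<bullet> b\<bar> * norm (D x b)" by simp
      also have "\<dots> \<le> norm h * M b"
        by (rule mult_mono) (use Basis_le_norm[OF b] M[OF x] in auto)
      finally show "norm ((h \<bullet> b) *\<^sub>R D x b) \<le> norm h * M b" .
    qed
    also have "\<dots> = B * norm h" unfolding B_def by (simp add: sum_distrib_left mult.commute)
    finally show ?thesis .
  qed
  show ?thesis
  proof (intro exI[of _ "max 0 B"] conjI ballI)
    fix x y assume x: "x \<in> cball (0::'a) R" and y: "y \<in> cball (0::'a) R"
    have "norm (f x - f y) \<le> B * norm (x - y)"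
    proof (rule differentiable_bound[of "cball 0 R" f D])
      show "convex (cball (0::'a) R)" by simp
      show "(f has_derivative D z) (at z within cball 0 R)" for z
        using der has_derivative_at_withinI by blast
      show "onorm (D z) \<le> B" if "z \<in> cball 0 R" for z
        by (rule onorm_le) (use bnd that in auto)
    qed (use x y in auto)
    also have "\<dots> \<le> max 0 B * norm (x - y)" by (simp add: mult_right_mono)
    finally show "norm (f x - f y) \<le> max 0 B * norm (x - y)" .
  qed simp
qed

lemma gronwall:
  fixes u w :: "real \<Rightarrow> 'a::real_inner" and g :: "'a \<Rightarrow> 'a"
  assumes du: "\<And>s. (u has_vector_derivative g (u s)) (at s)"
    and dw: "\<And>s. (w has_vector_derivative g (w s)) (at s)"
    and lip: "\<forall>x\<in>K. \<forall>y\<in>K. norm (g x - g y) \<le> L * norm (x - y)"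
    and inK: "\<And>s. s \<in> {0..T} \<Longrightarrow> u s \<in> K \<and> w s \<in> K"
    and s: "s \<in> {0..T}"
  shows "norm (u s - w s) \<le> exp (L * s) * norm (u 0 - w 0)"
proof -
  define d where "d r = u r - w r" for r
  define q where "q r = d r \<bullet> d r" for r
  define h where "h r = exp (-2 * L * r) * q r" for r
  have dd: "(d has_vector_derivative (g (u r) - g (w r))) (at r)" for r
    unfolding d_def by (intro derivative_intros du dw)
  have qd: "(q has_field_derivative 2 * (d r \<bullet> (g (u r) - g (w r)))) (at r)" for r
  proof -
    have hd: "(d has_derivative (\<lambda>x. x *\<^sub>R (g (u r) - g (w r)))) (at r)"
      using dd[of r] unfolding has_vector_derivative_def .
    have "(q has_derivative (\<lambda>x. d r \<bullet> (x *\<^sub>R (g (u r) - g (w r))) + (x *\<^sub>R (g (u r) - g (w r))) \<bullet> d r)) (at r)"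
      unfolding q_def by (rule has_derivative_inner[OF hd hd])
    then show ?thesis unfolding has_field_derivative_def
      by (rule has_derivative_eq_rhs) (auto simp: inner_commute algebra_simps)
  qed
  have hd: "(h has_field_derivative (exp (-2 * L * r) * (-2 * L) * q r + exp (-2 * L * r) * (2 * (d r \<bullet> (g (u r) - g (w r)))))) (at r)" for r
    unfolding h_def by (auto intro!: derivative_eq_intros qd simp: algebra_simps)
  have "h s \<le> h 0"
  proof (rule DERIV_nonpos_imp_nonincreasing[of 0 s h])
    show "0 \<le> s" using s by auto
    fix r assume r: "0 \<le> r" "r \<le> s"
    have K: "u r \<in> K" "w r \<in> K" using inK[of r] r s by auto
    have "d r \<bullet> (g (u r) - g (w r)) \<le> norm (d r) * norm (g (u r) - g (w r))"
      by (rule norm_cauchy_schwarz)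
    also have "\<dots> \<le> norm (d r) * (L * norm (d r))"
      using lip K unfolding d_def by (intro mult_left_mono) auto
    also have "\<dots> = L * q r" unfolding q_def by (simp add: power2_norm_eq_inner[symmetric] power2_eq_square)
    finally have "d r \<bullet> (g (u r) - g (w r)) \<le> L * q r" .
    then have A: "exp (-2 * L * r) * (2 * (d r \<bullet> (g (u r) - g (w r)))) \<le> exp (-2 * L * r) * (2 * (L * q r))"
      by (intro mult_left_mono) auto
    have B: "exp (-2 * L * r) * (-2 * L) * q r = - (exp (-2 * L * r) * (2 * (L * q r)))" by (simp add: algebra_simps)
    have "exp (-2 * L * r) * (-2 * L) * q r + exp (-2 * L * r) * (2 * (d r \<bullet> (g (u r) - g (w r)))) \<le> 0"
      using A B by linarith
    then show "\<exists>y. (h has_real_derivative y) (at r) \<and> y \<le> 0" using hd by blast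
  qed
  then have "exp (-2 * L * s) * (norm (d s))^2 \<le> (norm (d 0))^2"
    unfolding h_def q_def by (simp add: power2_norm_eq_inner)
  then have "(norm (d s))^2 \<le> exp (2 * L * s) * (norm (d 0))^2"
    by (simp add: exp_minus field_simps mult_exp_exp)
  also have "\<dots> = (exp (L * s) * norm (d 0))^2"
    by (simp add: power_mult_distrib exp_double[symmetric] power2_eq_square mult_exp_exp)
  finally show ?thesis unfolding d_def
    by (rule power2_le_imp_le) simp
qed

lemma sol_cont:
  assumes "\<And>s. (u has_vector_derivative u' s) (at s)"
  shows "continuous_on S u"
  by (rule continuous_on_vector_derivative) (use assms has_vector_derivative_at_within in blast)

lemma cont_bound:
  fixes u :: "real \<Rightarrow> 'a::real_normed_vector"
  assumes "continuous_on {a..b} u"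
  shows "\<exists>R. \<forall>r\<in>{a..b}. norm (u r) \<le> R"
proof -
  have "compact (u ` {a..b})" by (rule compact_continuous_image[OF assms]) simp
  then show ?thesis using compact_imp_bounded bounded_iff by (metis imageI)
qed

lemma ode_unique_fwd:
  fixes g :: "'a::real_inner \<Rightarrow> 'a"
  assumes lipb: "\<And>R. \<exists>L. \<forall>x\<in>cball 0 R. \<forall>y\<in>cball 0 R. norm (g x - g y) \<le> L * norm (x - y)"
    and du: "\<And>s. (u has_vector_derivative g (u s)) (at s)"
    and dw: "\<And>s. (w has_vector_derivative g (w s)) (at s)"
    and e: "u 0 = w 0" and s: "0 \<le> s"
  shows "u s = w s"
proof -
  obtain R1 where R1: "\<forall>r\<in>{0..s}. norm (u r) \<le> R1" using cont_bound sol_cont[OF du] by blast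
  obtain R2 where R2: "\<forall>r\<in>{0..s}. norm (w r) \<le> R2" using cont_bound sol_cont[OF dw] by blast
  obtain L where L: "\<forall>x\<in>cball 0 (max R1 R2). \<forall>y\<in>cball 0 (max R1 R2). norm (g x - g y) \<le> L * norm (x - y)"
    using lipb by blast
  have "norm (u s - w s) \<le> exp (L * s) * norm (u 0 - w 0)"
  proof (rule gronwall[OF du dw L, of s])
    fix r assume r: "r \<in> {0..s}"
    have "norm (u r) \<le> max R1 R2" using R1 r by (meson max.cobounded1 order_trans)
    moreover have "norm (w r) \<le> max R1 R2" using R2 r by (meson max.cobounded2 order_trans)
    ultimately show "u r \<in> cball 0 (max R1 R2) \<and> w r \<in> cball 0 (max R1 R2)" by simp
  qed (use s in auto)
  then show ?thesis using e by simp
qed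

lemma ode_unique:
  fixes g :: "'a::real_inner \<Rightarrow> 'a"
  assumes lipb: "\<And>R. \<exists>L. \<forall>x\<in>cball 0 R. \<forall>y\<in>cball 0 R. norm (g x - g y) \<le> L * norm (x - y)"
    and du: "\<And>s. (u has_vector_derivative g (u s)) (at s)"
    and dw: "\<And>s. (w has_vector_derivative g (w s)) (at s)"
    and e: "u 0 = w 0"
  shows "u s = w s"
proof (cases "0 \<le> s")
  case True then show ?thesis using ode_unique_fwd[OF lipb du dw e] by blast
next
  case False
  have lipb': "\<exists>L. \<forall>x\<in>cball 0 R. \<forall>y\<in>cball 0 R. norm ((-g x) - (-g y)) \<le> L * norm (x - y)" for R
  proof -
    have eq: "norm ((-a) - (-b)) = norm (a - b)" for a b :: 'a
    proof -
      have "(-a) - (-b) = -(a - b)" by simp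
      then show ?thesis by (simp only: norm_minus_cancel)
    qed
    show ?thesis using lipb[of R] unfolding eq .
  qed
  have rev: "((\<lambda>r. v (-r)) has_vector_derivative - g ((\<lambda>r. v (-r)) s)) (at s)"
    if dv: "\<And>s. (v has_vector_derivative g (v s)) (at s)" for v s
  proof -
    have "((v \<circ> (\<lambda>r. -r)) has_vector_derivative (-1) *\<^sub>R g (v (-s))) (at s)"
    proof (rule vector_diff_chain_at)
      show "((\<lambda>r. -r) has_vector_derivative (-1)) (at s)"
        using has_vector_derivative_minus[OF has_vector_derivative_id] .
      show "(v has_vector_derivative g (v (-s))) (at (-s))" by (rule dv)
    qed
    then show ?thesis by (simp add: o_def)
  qed
  have "(\<lambda>r. u (-r)) (-s) = (\<lambda>r. w (-r)) (-s)"
    by (rule ode_unique_fwd[of "\<lambda>x. - g x"]) (use lipb' rev[OF du] rev[OF dw] e False in auto)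
  then show ?thesis by simp
qed

lemma flow_deriv:
  assumes "is_flow f phi"
  shows "((\<lambda>s. phi x s) has_vector_derivative f (phi x t)) (at t)"
  using assms unfolding is_flow_def by blast

lemma flow0: "is_flow f phi \<Longrightarrow> phi x 0 = x"
  unfolding is_flow_def by blast

lemma flow_shift:
  fixes f :: "real^'n \<Rightarrow> real^'n"
  assumes sm: "smooth_map f" and fl: "is_flow f phi"
  shows "phi (phi y a) s = phi y (a + s)"
proof -
  have lipb: "\<exists>L. \<forall>x\<in>cball 0 R. \<forall>y\<in>cball 0 R. norm (f x - f y) \<le> L * norm (x - y)" for R
    using smooth_lipschitz[OF sm, of R] by blast
  have dw: "((\<lambda>s. phi y (a + s)) has_vector_derivative f (phi y (a + s))) (at s)" for s
  proof -
    have "((phi y \<circ> (\<lambda>s. a + s)) has_vector_derivative 1 *\<^sub>R f (phi y (a + s))) (at s)"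
    proof (rule vector_diff_chain_at)
      show "((\<lambda>s. a + s) has_vector_derivative 1) (at s)"
        using has_vector_derivative_add[OF has_vector_derivative_const has_vector_derivative_id] by simp
      show "(phi y has_vector_derivative f (phi y (a + s))) (at (a + s))"
        using flow_deriv[OF fl] by blast
    qed
    then show ?thesis by (simp add: o_def)
  qed
  show ?thesis
    by (rule ode_unique[OF lipb, of "phi (phi y a)" "\<lambda>s. phi y (a + s)"])
       (use flow_deriv[OF fl] dw flow0[OF fl] in auto)
qed

lemma flow_cont:
  fixes f :: "real^'n \<Rightarrow> real^'n"
  assumes sm: "smooth_map f" and fl: "is_flow f phi" and t: "0 \<le> t" and e: "\<epsilon> > 0"
  shows "\<exists>\<delta>>0. \<forall>v. dist v y < \<delta> \<longrightarrow> dist (phi v t) (phi y t) < \<epsilon>"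
proof -
  have dphi: "\<And>x s. (phi x has_vector_derivative f (phi x s)) (at s)"
    using flow_deriv[OF fl] by blast
  obtain R0 where R0: "\<forall>r\<in>{0..t}. norm (phi y r) \<le> R0"
    using cont_bound sol_cont[OF dphi] by blast
  define R where "R = R0 + 1"
  obtain L where L0: "L \<ge> 0" and L: "\<forall>x\<in>cball 0 R. \<forall>z\<in>cball 0 R. norm (f x - f z) \<le> L * norm (x - z)"
    using smooth_lipschitz[OF sm, of R] by blast
  define \<delta> where "\<delta> = min \<epsilon> 1 / exp (L * t)"
  have dpos: "\<delta> > 0" unfolding \<delta>_def using e by simp
  have ed: "exp (L * t) * \<delta> = min \<epsilon> 1" unfolding \<delta>_def by simp
  show ?thesis
  proof (intro exI[of _ \<delta>] conjI allI impI dpos)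
    fix v assume dv: "dist v y < \<delta>"
    have helper: "norm (phi v \<tau> - phi y \<tau>) < min \<epsilon> 1"
      if tau: "\<tau> \<in> {0..t}" and inb: "\<forall>r\<in>{0..\<tau>}. norm (phi v r) \<le> R" for \<tau>
    proof -
      have "norm (phi v \<tau> - phi y \<tau>) \<le> exp (L * \<tau>) * norm (phi v 0 - phi y 0)"
      proof (rule gronwall[OF dphi dphi L, of \<tau>])
        fix r assume r: "r \<in> {0..\<tau>}"
        show "phi v r \<in> cball 0 R \<and> phi y r \<in> cball 0 R"
        proof -
          have "norm (phi y r) \<le> R0" using R0 r tau by auto
          moreover have "norm (phi v r) \<le> R" using inb r by auto
          ultimately show ?thesis unfolding R_def by auto
        qed
      qed (use tau in auto)
      also have "\<dots> = exp (L * \<tau>) * dist v y" using flow0[OF fl] by (simp add: dist_norm)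
      also have "\<dots> \<le> exp (L * t) * dist v y"
        using tau L0 by (intro mult_right_mono) (auto intro: mult_left_mono)
      also have "\<dots> < exp (L * t) * \<delta>" using dv by simp
      finally show ?thesis using ed by simp
    qed
    have allR: "\<forall>r\<in>{0..t}. norm (phi v r) \<le> R"
    proof (rule ccontr)
      assume neg: "\<not> (\<forall>r\<in>{0..t}. norm (phi v r) \<le> R)"
      define E where "E = {0..t} \<inter> {r. R \<le> norm (phi v r)}"
      have Ene: "E \<noteq> {}" using neg unfolding E_def by force
      have cphi: "continuous_on UNIV (phi v)" using sol_cont[OF dphi] .
      have Ecl: "closed E" unfolding E_def
        by (intro closed_Int closed_atLeastAtMost closed_Collect_le continuous_on_const
            continuous_on_norm cphi) 
      have Ebd: "bdd_below E" unfolding E_def by (rule bdd_belowI[of _ 0]) auto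
      define \<tau> where "\<tau> = Inf E"
      have tauE: "\<tau> \<in> E" unfolding \<tau>_def using closed_contains_Inf[OF Ene Ebd Ecl] .
      have v0: "norm (phi v 0) < R"
      proof -
        have "norm v \<le> norm y + dist v y" by (metis dist_norm norm_triangle_sub add.commute)
        moreover have "norm y \<le> R0" using R0 t flow0[OF fl, of y] by force
        moreover have "\<delta> \<le> 1"
        proof -
          have "1 \<le> exp (L * t)" using L0 t by simp
          then have "min \<epsilon> 1 / exp (L * t) \<le> min \<epsilon> 1 / 1" using e
            by (intro divide_left_mono) auto
          then show ?thesis unfolding \<delta>_def by linarith
        qed
        ultimately show ?thesis using flow0[OF fl, of v] dv unfolding R_def by auto
      qed
      have below: "norm (phi v r) < R" if "r \<in> {0..<\<tau>}" for r
      proof (rule ccontr)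
        assume "\<not> norm (phi v r) < R"
        then have "r \<in> E" using that tauE unfolding E_def by auto
        then have "\<tau> \<le> r" unfolding \<tau>_def using Ebd by (simp add: cInf_lower)
        then show False using that by simp
      qed
      have taupos: "0 < \<tau>"
      proof -
        have "0 \<le> \<tau>" using tauE unfolding E_def by auto
        moreover have "\<tau> \<noteq> 0" using tauE v0 unfolding E_def by auto
        ultimately show ?thesis by simp
      qed
      have C: "closed {r. norm (phi v r) \<le> R}"
        by (intro closed_Collect_le continuous_on_const continuous_on_norm cphi)
      have "{0..<\<tau>} \<subseteq> {r. norm (phi v r) \<le> R}" using below by fastforce
      then have "closure {0..<\<tau>} \<subseteq> {r. norm (phi v r) \<le> R}" using C closure_minimal by blast
      then have inb: "\<forall>r\<in>{0..\<tau>}. norm (phi v r) \<le> R" using taupos by auto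
      have tt: "\<tau> \<in> {0..t}" using tauE unfolding E_def by auto
      have "norm (phi v \<tau> - phi y \<tau>) < 1" using helper[OF tt inb] by simp
      moreover have "norm (phi y \<tau>) \<le> R0" using R0 tt by auto
      ultimately have "norm (phi v \<tau>) < R" unfolding R_def
        using norm_triangle_sub[of "phi v \<tau>" "phi y \<tau>"] by linarith
      then show False using tauE unfolding E_def by auto
    qed
    show "dist (phi v t) (phi y t) < \<epsilon>"
      using helper[of t] allR t by (auto simp: dist_norm)
  qed
qed

lemma traj_in_V:
  fixes f :: "real^'n \<Rightarrow> real^'n"
  assumes fl: "is_flow f phi" and cert: "eps_reach f mu V \<subseteq> V" and mu: "mu > 0"
    and v: "v \<in> V" and s: "0 \<le> s"
  shows "phi v s \<in> V"
proof -
  have "eps_solution f mu (phi v)"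
    unfolding eps_solution_def
    by (rule exI[of _ "\<lambda>s. f (phi v s)"])
       (auto intro!: has_vector_derivative_at_within flow_deriv[OF fl] simp: less_imp_le[OF mu])
  then have "phi v s \<in> eps_reach f mu V"
    unfolding eps_reach_def
    by (intro CollectI exI[of _ "phi v"] exI[of _ s]) (use flow0[OF fl, of v] v s in simp)
  then show ?thesis using cert by blast
qed

lemma robust_ball:
  fixes f :: "real^'n \<Rightarrow> real^'n"
  assumes sm: "smooth_map f" and fl: "is_flow f phi"
    and cert: "eps_reach f mu V \<subseteq> V" and mu: "mu > 0"
    and bnd: "\<forall>x\<in>V. norm x \<le> R0" and t: "t > 0"
  shows "\<exists>r>0. \<forall>v\<in>V. \<forall>p. dist p (phi v t) < r \<longrightarrow> p \<in> V"
proof -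
  obtain L where L0: "L \<ge> 0" and L: "\<forall>x\<in>cball 0 (R0+1). \<forall>z\<in>cball 0 (R0+1). norm (f x - f z) \<le> L * norm (x - z)"
    using smooth_lipschitz[OF sm, of "R0+1"] by blast
  define r0 where "r0 = min 1 (mu / (L + 1))"
  define c where "c = t / (t + 1)"
  have r0: "r0 > 0" unfolding r0_def using mu L0 by simp
  have c: "c > 0" unfolding c_def using t by simp
  show ?thesis
  proof (intro exI[of _ "c * r0"] conjI ballI allI impI)
    show "c * r0 > 0" using r0 c by simp
    fix v p assume v: "v \<in> V" and dp: "dist p (phi v t) < c * r0"
    define w where "w = (1 / c) *\<^sub>R (p - phi v t)"
    have nw: "norm w < r0"
    proof -
      have "norm w = dist p (phi v t) / c" unfolding w_def using c by (simp add: dist_norm)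
      then show ?thesis using dp c by (simp add: divide_less_eq mult.commute)
    qed
    have nw1: "norm w \<le> 1" and nw2: "(L + 1) * norm w \<le> mu"
    proof -
      show "norm w \<le> 1" using nw unfolding r0_def by simp
      have "norm w \<le> mu / (L + 1)" using nw unfolding r0_def by simp
      then show "(L + 1) * norm w \<le> mu" using L0 by (simp add: field_simps)
    qed
    define z where "z s = phi v s + (s / (s + 1)) *\<^sub>R w" for s
    define z' where "z' s = f (phi v s) + (1 / (s + 1)^2) *\<^sub>R w" for s
    have gd: "((\<lambda>s. s / (s + 1)) has_real_derivative 1 / (s + 1)^2) (at s)" if "s \<ge> 0" for s :: real
    proof -
      have "((\<lambda>s. s / (s + 1)) has_real_derivative (1 * (s + 1) - s * 1) / ((s + 1) * (s + 1))) (at s)"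
      proof (rule DERIV_divide)
        show "((\<lambda>x. x + 1) has_real_derivative 1) (at s)" by (auto intro!: derivative_eq_intros)
      qed (use that in \<open>auto intro: derivative_intros\<close>)
      then show ?thesis by (simp add: power2_eq_square)
    qed
    have zd: "(z has_vector_derivative z' s) (at s)" if "s \<ge> 0" for s
    proof -
      have "((\<lambda>s. (s / (s + 1)) *\<^sub>R w) has_vector_derivative ((s / (s + 1)) *\<^sub>R 0 + (1 / (s + 1)^2) *\<^sub>R w)) (at s)"
        by (rule has_vector_derivative_scaleR[OF gd[OF that] has_vector_derivative_const])
      then have "((\<lambda>s. (s / (s + 1)) *\<^sub>R w) has_vector_derivative (1 / (s + 1)^2) *\<^sub>R w) (at s)" by simp
      then show ?thesis unfolding z_def z'_def
        by (intro has_vector_derivative_add flow_deriv[OF fl])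
    qed
    have err: "norm (f (z s) - z' s) \<le> mu" if s: "s \<ge> 0" for s
    proof -
      define a where "a = phi v s"
      define g where "g = s / (s + 1)"
      define g' where "g' = 1 / (s + 1)^2"
      have a: "norm a \<le> R0" unfolding a_def using bnd traj_in_V[OF fl cert mu v s] by blast
      have g: "0 \<le> g" "g \<le> 1" unfolding g_def using s by auto
      have g': "0 \<le> g'" "g' \<le> 1"
      proof -
        have "1 \<le> (s + 1)^2" by (rule one_le_power) (use s in simp)
        then show "0 \<le> g'" "g' \<le> 1" unfolding g'_def by (auto simp: divide_le_eq)
      qed
      have ngw: "norm (g *\<^sub>R w) \<le> norm w" using g by (simp add: mult_left_le_one_le)
      have aK: "a \<in> cball 0 (R0+1)" using a by simp
      have awK: "a + g *\<^sub>R w \<in> cball 0 (R0+1)"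
        using a ngw nw1 norm_triangle_ineq[of a "g *\<^sub>R w"] by simp
      have "f (z s) - z' s = (f (a + g *\<^sub>R w) - f a) - g' *\<^sub>R w"
        unfolding z_def z'_def a_def g_def g'_def by simp
      then have "norm (f (z s) - z' s) \<le> norm (f (a + g *\<^sub>R w) - f a) + norm (g' *\<^sub>R w)"
        by (metis norm_triangle_ineq4)
      also have "norm (f (a + g *\<^sub>R w) - f a) \<le> L * norm w"
      proof -
        have "norm (f (a + g *\<^sub>R w) - f a) \<le> L * norm (a + g *\<^sub>R w - a)" using L aK awK by blast
        also have "\<dots> \<le> L * norm w" using ngw L0 by (simp add: mult_left_mono)
        finally show ?thesis .
      qed
      also have "norm (g' *\<^sub>R w) \<le> norm w" using g' by (simp add: mult_left_le_one_le)
      finally show ?thesis using nw2 by (simp add: algebra_simps)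
    qed
    have "eps_solution f mu z"
      unfolding eps_solution_def
      by (rule exI[of _ z']) (use zd has_vector_derivative_at_within err in blast)
    moreover have "z 0 = v" unfolding z_def using flow0[OF fl] by simp
    ultimately have "z t \<in> eps_reach f mu V" unfolding eps_reach_def
      by (intro CollectI exI[of _ z] exI[of _ t]) (use v t in simp)
    moreover have "z t = p" unfolding z_def w_def c_def using t by simp
    ultimately show "p \<in> V" using cert by blast
  qed
qed

lemma claimA:
  fixes f :: "real^'n \<Rightarrow> real^'n"
  assumes sm: "smooth_map f" and fl: "is_flow f phi"
    and cert: "eps_reach f mu V \<subseteq> V" and mu: "mu > 0"
    and bnd: "\<forall>x\<in>V. norm x \<le> R0" and t: "t > 0" and y: "y \<in> closure V"
  shows "phi y t \<in> interior (closure V)"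
proof -
  obtain r where r: "r > 0" and rb: "\<forall>v\<in>V. \<forall>p. dist p (phi v t) < r \<longrightarrow> p \<in> V"
    using robust_ball[OF sm fl cert mu bnd t] by blast
  obtain \<delta> where d: "\<delta> > 0" and dc: "\<forall>v. dist v y < \<delta> \<longrightarrow> dist (phi v t) (phi y t) < r / 2"
    using flow_cont[OF sm fl less_imp_le[OF t], of "r/2" y] r by auto
  obtain v where v: "v \<in> V" and dv: "dist v y < \<delta>"
    using y d unfolding closure_approachable by blast
  have "ball (phi y t) (r/2) \<subseteq> V"
  proof
    fix p assume "p \<in> ball (phi y t) (r/2)"
    then have "dist p (phi y t) < r/2" by (simp add: dist_commute)
    moreover have "dist (phi y t) (phi v t) < r/2" using dc dv by (simp add: dist_commute)
    ultimately have "dist p (phi v t) < r" using dist_triangle[of p "phi v t" "phi y t"] by linarith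
    then show "p \<in> V" using rb v by blast
  qed
  then have "phi y t \<in> interior V" using r by (meson half_gt_zero mem_interior)
  then show ?thesis using interior_mono closure_subset by blast
qed

theorem lemma2:
  fixes f :: "real^'n \<Rightarrow> real^'n" and phi :: "real^'n \<Rightarrow> real \<Rightarrow> real^'n"
    and I U V :: "(real^'n) set" and mu :: real
  assumes "smooth_map f"
    and "is_flow f phi"
    and "robustly_safe f I U mu"
    and "closure I \<inter> closure U = {}"
    and "bounded (UNIV - U)"
    and "robust_certificate f I U mu V"
  shows "\<forall>x \<in> flow_reach phi (frontier (closure V)). \<exists>!t. phi x t \<in> frontier (closure V)"
proof
  note sm = assms(1) and fl = assms(2)
  have mu: "mu > 0" using assms(3) unfolding robustly_safe_def by blast
  have cert: "eps_reach f mu V \<subseteq> V" and VU: "V \<inter> U = {}"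
    using assms(6) unfolding robust_certificate_def by blast+
  have "bounded V" using VU assms(5) bounded_subset by blast
  then obtain R0 where bnd: "\<forall>x\<in>V. norm x \<le> R0" unfolding bounded_iff by blast
  fix x assume "x \<in> flow_reach phi (frontier (closure V))"
  then obtain y t0 where x: "x = phi y t0" and y: "y \<in> frontier (closure V)"
    unfolding flow_reach_def by blast
  show "\<exists>!t. phi x t \<in> frontier (closure V)"
  proof (rule ex1I[of _ "-t0"])
    show "phi x (-t0) \<in> frontier (closure V)"
      using y unfolding x flow_shift[OF sm fl] by (simp add: flow0[OF fl])
  next
    have key: "False" if t12: "t1 < t2" and f1: "phi x t1 \<in> frontier (closure V)"
      and f2: "phi x t2 \<in> frontier (closure V)" for t1 t2
    proof -
      have "phi x t1 \<in> closure V" using f1 unfolding frontier_def by simp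
      then have "phi (phi x t1) (t2 - t1) \<in> interior (closure V)"
        using claimA[OF sm fl cert mu bnd] t12 by simp
      then have "phi x t2 \<in> interior (closure V)" unfolding flow_shift[OF sm fl] by simp
      then show False using f2 unfolding frontier_def by simp
    qed
    have ex: "phi x (-t0) \<in> frontier (closure V)"
      using y unfolding x flow_shift[OF sm fl] by (simp add: flow0[OF fl])
    fix t assume "phi x t \<in> frontier (closure V)"
    then show "t = -t0" using key ex by (metis linorder_neqE_linordered_idom)
  qed
qed

end
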